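(* Let $n\ge3$ and consider the scoring two-player Tower of Hanoi game on three pegs with real weights $w_{12},w_{13},w_{23}$, under any of the ending conditions (EC1)–(EC5), played from an arbitrary (non-final) position, where the previous player's move did not move the smallest disk. Then the player to move wins, unless $w_{12}=w_{13}=w_{23}\le0$.
   Context: Tower of Hanoi on three pegs (labeled 1, 2, 3) with $n$ disks of pairwise distinct sizes: a position assigns each disk to a peg, disks on each peg stacked with sizes decreasing from bottom to top. A legal move transfers the top disk of one peg to a different peg that is empty or has a larger top disk; a move from Peg $i$ to Peg $j$ or from Peg $j$ to Peg $i$ is a move along edge $\{i,j\}$. A tower position is one with all disks on one peg. Two-player game: two players alternate moves; a player may not move the disk that the opponent moved in the immediately preceding move (so a position in the two-player game also records the last moved disk). The game starts (ordinarily) with all disks on Peg 1 and ends when the tower has been transferred to a final peg, according to one fixed ending condition: (EC1) all disks on a given peg distinct from Peg 1; (EC2) all disks on Peg 1, the largest disk having been moved at least once; (EC3) all disks on Peg 1, the smallest disk having been moved at least once; (EC4) all disks on any peg, the largest disk having been moved at least once; (EC5) all disks on any peg, the smallest disk having been moved at least once. A move creating a tower position that does not end the game (tower on a non-final peg) is not allowed. Scoring play: real weights $w_{12},w_{13},w_{23}$ are given (with $w_{ij}=w_{ji}$); a player making a move along edge $\{i,j\}$ earns $w_{ij}$ points. When the game ends, the player with strictly more points wins, and equal points is a tie. A player "wins" if she/he has a strategy forcing the game to end with her/his victory. *)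

theory Defs
  imports Main "HOL.Real"
begin

text \<open>Disks are numbered 0,...,n-1 by size: disk 0 is the smallest, disk n-1 the largest.
  Pegs are 1, 2, 3. A position assigns a peg to each disk.\<close>

datatype ending = EC1 nat | EC2 | EC3 | EC4 | EC5

record hstate =
  pos :: "nat \<Rightarrow> nat"
  lastd :: "nat option"
  movedL :: bool
  movedS :: bool

definition peg :: "nat \<Rightarrow> bool" where
  "peg i \<longleftrightarrow> i \<in> {1, 2, 3}"

definition tower :: "nat \<Rightarrow> (nat \<Rightarrow> nat) \<Rightarrow> nat \<Rightarrow> bool" where
  "tower n p q \<longleftrightarrow> (\<forall>k<n. p k = q)"

definition valid_ending :: "ending \<Rightarrow> bool" where
  "valid_ending e = (case e of EC1 f \<Rightarrow> f \<in> {2, 3} | _ \<Rightarrow> True)"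

definition ends :: "nat \<Rightarrow> ending \<Rightarrow> hstate \<Rightarrow> bool" where
  "ends n e s = (case e of
      EC1 f \<Rightarrow> tower n (pos s) f
    | EC2 \<Rightarrow> tower n (pos s) 1 \<and> movedL s
    | EC3 \<Rightarrow> tower n (pos s) 1 \<and> movedS s
    | EC4 \<Rightarrow> (\<exists>q\<in>{1,2,3}. tower n (pos s) q) \<and> movedL s
    | EC5 \<Rightarrow> (\<exists>q\<in>{1,2,3}. tower n (pos s) q) \<and> movedS s)"

definition after :: "nat \<Rightarrow> hstate \<Rightarrow> nat \<Rightarrow> nat \<Rightarrow> hstate" where
  "after n s k j = \<lparr> pos = (pos s)(k := j), lastd = Some k,
                     movedL = (movedL s \<or> k = n - 1), movedS = (movedS s \<or> k = 0) \<rparr>"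

definition legal :: "nat \<Rightarrow> ending \<Rightarrow> hstate \<Rightarrow> nat \<Rightarrow> nat \<Rightarrow> bool" where
  "legal n e s k j \<longleftrightarrow>
     k < n \<and> peg j \<and> j \<noteq> pos s k \<and>
     (\<forall>k'<k. pos s k' \<noteq> pos s k \<and> pos s k' \<noteq> j) \<and>
     lastd s \<noteq> Some k \<and>
     ((\<exists>q. tower n (pos (after n s k j)) q) \<longrightarrow> ends n e (after n s k j))"

definition wt :: "real \<Rightarrow> real \<Rightarrow> real \<Rightarrow> nat \<Rightarrow> nat \<Rightarrow> real" where
  "wt w12 w13 w23 i j =
     (if {i, j} = {1, 2} then w12 else if {i, j} = {1, 3} then w13 else w23)"

text \<open>wins n e w12 w13 w23 s d: the player to move in state s, whose score minus the
  opponent's score is d, has a strategy forcing the game to end with her strictly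
  higher score. (Least fixed point: infinite plays and stuck plays are not wins.)\<close>
inductive wins :: "nat \<Rightarrow> ending \<Rightarrow> real \<Rightarrow> real \<Rightarrow> real \<Rightarrow> hstate \<Rightarrow> real \<Rightarrow> bool"
  for n e w12 w13 w23 where
  step: "\<lbrakk> legal n e s k j;
           s' = after n s k j;
           d' = d + wt w12 w13 w23 (pos s k) j;
           (ends n e s' \<and> d' > 0) \<or>
           (\<not> ends n e s' \<and> (\<exists>k' j'. legal n e s' k' j') \<and>
            (\<forall>k' j'. legal n e s' k' j' \<longrightarrow>
               (ends n e (after n s' k' j') \<and> d' - wt w12 w13 w23 (pos s' k') j' > 0) \<or>
               (\<not> ends n e (after n s' k' j') \<and>
                 wins n e w12 w13 w23 (after n s' k' j') (d' - wt w12 w13 w23 (pos s' k') j')))) \<rbrakk>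
         \<Longrightarrow> wins n e w12 w13 w23 s d"

end

theory Submission
  imports Defs
begin

locale hg = fixes n :: nat and e :: ending and w12 w13 w23 :: real assumes n3: "3 \<le> n"
begin

abbreviation W where "W \<equiv> wt w12 w13 w23"
abbreviation WIN where "WIN \<equiv> wins n e w12 w13 w23"
definition ok :: "hstate \<Rightarrow> bool" where "ok s \<longleftrightarrow> (\<forall>k<n. peg (pos s k)) \<and> lastd s \<noteq> Some 0"
definition rnd :: "hstate \<Rightarrow> nat \<Rightarrow> nat \<Rightarrow> hstate" where
  "rnd s y k = after n (after n s 0 y) k (6 - y - pos s k)"
definition gain where "gain s y k = W (pos s 0) y - W (pos s k) (6 - y - pos s k)"
definition Rch where "Rch s t \<delta> \<longleftrightarrow> (\<forall>d. WIN t (d + \<delta>) \<longrightarrow> WIN s d)"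

lemma ends_tower: "ends n e t \<Longrightarrow> \<exists>q. tower n (pos t) q"
  by (cases e) (auto simp: ends_def)

lemma round_wins:
  assumes ok: "ok s" and py: "peg y" and y0: "y \<noteq> pos s 0" and k1: "1 \<le> k" and kn: "k < n"
   and ky: "pos s k \<noteq> y" and below: "\<forall>j. 1 \<le> j \<and> j < k \<longrightarrow> pos s j = y"
   and w: "WIN (rnd s y k) (d + gain s y k)"
  shows "WIN s d"
proof -
  define s' where "s' = after n s 0 y"
  define jj where "jj = 6 - y - pos s k"
  have pk: "peg (pos s k)" using ok kn by (auto simp: ok_def)
  have jj: "peg jj" "jj \<noteq> y" "jj \<noteq> pos s k" using pk py ky by (auto simp: peg_def jj_def)
  have ps': "pos s' = (pos s)(0 := y)" "lastd s' = Some 0" by (simp_all add: s'_def after_def)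
  have notow: "\<not> tower n (pos s') q" for q
  proof
    assume "tower n (pos s') q"
    then have "pos s' 0 = q" "pos s' k = q" using kn k1 unfolding tower_def by auto
    then show False using ps' k1 ky by auto
  qed
  have legal0: "legal n e s 0 y"
    unfolding legal_def using notow py y0 ok kn by (auto simp: ok_def s'_def)
  have nE1: "\<not> ends n e s'" using notow ends_tower by blast
  define s'' where "s'' = after n s' k jj"
  have ps'': "pos s'' = (pos s)(0:=y, k:=jj)" by (simp add: s''_def after_def ps')
  have notow2: "\<not> tower n (pos s'') q" for q
  proof
    assume "tower n (pos s'') q"
    then have "pos s'' 0 = q" "pos s'' k = q" using kn k1 unfolding tower_def by auto
    then show False using ps'' k1 jj by auto
  qed
  have nE2: "\<not> ends n e s''" using notow2 ends_tower by blast
  have legalk: "legal n e s' k jj"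
    unfolding legal_def using kn jj k1 ky below notow2 ps' y0
    by (auto simp: s''_def[symmetric])
  have uniq: "k2 = k \<and> j2 = jj" if L: "legal n e s' k2 j2" for k2 j2
  proof -
    have a: "k2 < n" "peg j2" "j2 \<noteq> pos s' k2" "\<forall>k'<k2. pos s' k' \<noteq> pos s' k2 \<and> pos s' k' \<noteq> j2"
      "lastd s' \<noteq> Some k2" using L unfolding legal_def by auto
    have k20: "k2 \<noteq> 0" using a(5) ps' by auto
    have pk2: "peg (pos s k2)" using ok a(1) by (auto simp: ok_def)
    have b: "y \<noteq> pos s k2" "y \<noteq> j2" "j2 \<noteq> pos s k2" using a(3) a(4)[rule_format, of 0] k20 ps' by auto
    have "\<not> k2 < k" using below b k20 by auto
    moreover have "\<not> k < k2"
    proof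
      assume "k < k2"
      then have "pos s k \<noteq> pos s k2" "pos s k \<noteq> j2" using a(4)[rule_format, of k] ps' k1 by auto
      then show False using b pk pk2 a(2) ky py by (auto simp: peg_def)
    qed
    ultimately have "k2 = k" by auto
    then show ?thesis using b pk a(2) ky jj by (auto simp: peg_def jj_def)
  qed
  have rndeq: "rnd s y k = s''" by (simp add: rnd_def s'_def s''_def jj_def)
  have pk': "pos s' k = pos s k" using ps' k1 by auto
  show ?thesis
  proof (rule wins.step[OF legal0 s'_def refl], rule disjI2, intro conjI)
    show "\<not> ends n e s'" by fact
    show "\<exists>k' j'. legal n e s' k' j'" using legalk by blast
    show "\<forall>k' j'. legal n e s' k' j' \<longrightarrow>
       ends n e (after n s' k' j') \<and> d + W (pos s 0) y - W (pos s' k') j' > 0 \<or>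
       \<not> ends n e (after n s' k' j') \<and> WIN (after n s' k' j') (d + W (pos s 0) y - W (pos s' k') j')"
    proof (intro allI impI disjI2)
      fix k' j' assume "legal n e s' k' j'"
      then have "k' = k" "j' = jj" using uniq by auto
      then show "\<not> ends n e (after n s' k' j') \<and> WIN (after n s' k' j') (d + W (pos s 0) y - W (pos s' k') j')"
        using nE2 w rndeq pk' by (simp add: s''_def gain_def jj_def algebra_simps)
    qed
  qed
qed


definition EQ where "EQ \<longleftrightarrow> w12 = w13 \<and> w13 = w23"
definition R :: "nat \<Rightarrow> hstate \<Rightarrow> hstate \<Rightarrow> real \<Rightarrow> bool" where
  "R m s t \<delta> \<longleftrightarrow> Rch s t \<delta> \<and> ok t \<and> (\<forall>k. m \<le> k \<longrightarrow> pos t k = pos s k) \<and> (movedL s \<longrightarrow> movedL t) \<and> (EQ \<longrightarrow> \<delta> = 0)"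
definition C where "C s = s\<lparr>lastd := Some 1, movedL := (movedL s \<or> 2 = n - 1), movedS := True\<rparr>"

lemma n1: "1 < n" and n2: "2 < n" and n0: "0 < n" and n1': "Suc 0 < n" using n3 by auto

lemma W_simps: "W 1 2 = w12" "W 2 1 = w12" "W 1 3 = w13" "W 3 1 = w13" "W 2 3 = w23" "W 3 2 = w23"
  "W (Suc 0) 2 = w12" "W 2 (Suc 0) = w12" "W (Suc 0) 3 = w13" "W 3 (Suc 0) = w13"
  by (auto simp: wt_def doubleton_eq_iff)

lemma W_EQ: "EQ \<Longrightarrow> W a b = w12" by (auto simp: wt_def EQ_def)

lemma pos_rnd: "pos (rnd s y k) j = (if j = k then 6 - y - pos s k else if j = 0 then y else pos s j)"
  by (simp add: rnd_def after_def)
lemma lastd_rnd: "lastd (rnd s y k) = Some k" by (simp add: rnd_def after_def)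
lemma movedS_rnd: "movedS (rnd s y k)" by (simp add: rnd_def after_def)
lemma movedL_rnd: "movedL (rnd s y k) = (movedL s \<or> k = n - 1)" using n3 by (simp add: rnd_def after_def)

lemma ok_rnd: "ok s \<Longrightarrow> peg y \<Longrightarrow> 1 \<le> k \<Longrightarrow> k < n \<Longrightarrow> pos s k \<noteq> y \<Longrightarrow> ok (rnd s y k)"
  unfolding ok_def by (auto simp: pos_rnd lastd_rnd peg_def)

lemma Rch_round:
  assumes "ok s" "peg y" "y \<noteq> pos s 0" "1 \<le> k" "k < n" "pos s k \<noteq> y" "\<forall>j. 1 \<le> j \<and> j < k \<longrightarrow> pos s j = y"
    "Rch (rnd s y k) t (\<delta> - gain s y k)"
  shows "Rch s t \<delta>"
  unfolding Rch_def
proof (intro allI impI)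
  fix d assume a: "WIN t (d + \<delta>)"
  have e: "d + gain s y k + (\<delta> - gain s y k) = d + \<delta>" by simp
  have "WIN (rnd s y k) (d + gain s y k)"
    using assms(8)[unfolded Rch_def, rule_format, of "d + gain s y k"] a unfolding e by blast
  then show "WIN s d" by (rule round_wins[OF assms(1-7)])
qed

lemma Rch_r1: "ok s \<Longrightarrow> peg y \<Longrightarrow> y \<noteq> pos s 0 \<Longrightarrow> pos s 1 \<noteq> y \<Longrightarrow> Rch (rnd s y 1) t (\<delta> - gain s y 1) \<Longrightarrow> Rch s t \<delta>"
  by (rule Rch_round[of s y 1]) (use n1 in auto)

lemma Rch_r2: "ok s \<Longrightarrow> peg y \<Longrightarrow> y \<noteq> pos s 0 \<Longrightarrow> pos s 1 = y \<Longrightarrow> pos s 2 \<noteq> y \<Longrightarrow> Rch (rnd s y 2) t (\<delta> - gain s y 2) \<Longrightarrow> Rch s t \<delta>"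
proof (rule Rch_round[of s y 2])
  show "\<forall>j. 1 \<le> j \<and> j < 2 \<longrightarrow> pos s j = y" if "pos s 1 = y"
  proof (intro allI impI)
    fix j :: nat assume "1 \<le> j \<and> j < 2"
    then have "j = 1" by arith
    then show "pos s j = y" using that by simp
  qed
qed (use n2 in auto)

lemma Rch_refl: "s = t \<Longrightarrow> \<delta> = 0 \<Longrightarrow> Rch s t \<delta>" by (simp add: Rch_def)
lemma Rch_trans: "Rch s t a \<Longrightarrow> Rch t u b \<Longrightarrow> Rch s u (a + b)"
  unfolding Rch_def
proof (intro allI impI)
  fix d assume A: "\<forall>d. WIN t (d + a) \<longrightarrow> WIN s d" and B: "\<forall>d. WIN u (d + b) \<longrightarrow> WIN t d"
    and c: "WIN u (d + (a + b))"
  have "WIN t (d + a)" using B[rule_format, of "d + a"] c by (simp add: add.assoc)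
  then show "WIN s d" using A by blast
qed

lemma rec_eq: "pos a = pos b \<Longrightarrow> lastd a = lastd b \<Longrightarrow> movedL a = movedL b \<Longrightarrow> movedS a = movedS b \<Longrightarrow> a = (b::hstate)"
  by (cases a, cases b) simp

lemma fin:
  assumes "pos t 0 = pos s 0" "pos t 1 = pos s 1" "pos t 2 = pos s 2" "\<forall>j\<ge>3. pos t j = pos s j"
    "lastd t = Some 1" "movedL t = (movedL s \<or> 2 = n - 1)" "movedS t" "\<delta> = 0"
  shows "Rch t (C s) \<delta>"
proof (rule Rch_refl[OF rec_eq])
  have "pos t x = pos s x" for x
  proof -
    have "x = 0 \<or> x = 1 \<or> x = 2 \<or> x \<ge> 3" by arith
    then show ?thesis using assms(1-4) by auto
  qed
  then show "pos t = pos (C s)" unfolding C_def by auto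
qed (use assms in \<open>auto simp: C_def\<close>)

lemma n1'': "(Suc 0 = n - Suc 0) = False" using n3 by auto

lemmas cs = n1'' pos_rnd lastd_rnd movedS_rnd movedL_rnd ok_rnd W_simps gain_def n1 n2 n3 n1' peg_def

lemma cyc_2_0:
  assumes "ok s" "pos s 0 = 2" "pos s 1 = 1" "pos s 2 = 1"
  shows "Rch s (C s) (4*w12 - 2*w13 - 2*w23)"
  apply (insert assms)
  apply (rule Rch_r1[where y=3], (simp_all add: cs)[5])
  apply (rule Rch_r1[where y=1], (simp_all add: cs)[5])
  apply (rule Rch_r2[where y=3], (simp_all add: cs)[6])
  apply (rule Rch_r1[where y=2], (simp_all add: cs)[5])
  apply (rule Rch_r2[where y=1], (simp_all add: cs)[6])
  apply (rule Rch_r1[where y=2], (simp_all add: cs)[5])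
  apply (rule Rch_r1[where y=1], (simp_all add: cs)[5])
  apply (rule Rch_r2[where y=2], (simp_all add: cs)[6])
  apply (rule Rch_r1[where y=1], (simp_all add: cs)[5])
  apply (rule Rch_r1[where y=2], (simp_all add: cs)[5])
  apply (rule fin; simp add: cs)
  done

lemma cyc_2_1:
  assumes "ok s" "pos s 0 = 2" "pos s 1 = 1" "pos s 2 = 1"
  shows "Rch s (C s) (4*w13 - 2*w12 - 2*w23)"
  apply (insert assms)
  apply (rule Rch_r1[where y=3], (simp_all add: cs)[5])
  apply (rule Rch_r1[where y=1], (simp_all add: cs)[5])
  apply (rule Rch_r2[where y=3], (simp_all add: cs)[6])
  apply (rule Rch_r1[where y=1], (simp_all add: cs)[5])
  apply (rule Rch_r1[where y=3], (simp_all add: cs)[5])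
  apply (rule Rch_r2[where y=1], (simp_all add: cs)[6])
  apply (rule Rch_r1[where y=3], (simp_all add: cs)[5])
  apply (rule Rch_r2[where y=2], (simp_all add: cs)[6])
  apply (rule Rch_r1[where y=1], (simp_all add: cs)[5])
  apply (rule Rch_r1[where y=2], (simp_all add: cs)[5])
  apply (rule fin; simp add: cs)
  done

lemma cyc_2_2:
  assumes "ok s" "pos s 0 = 2" "pos s 1 = 1" "pos s 2 = 1"
  shows "Rch s (C s) (4*w23 - 2*w12 - 2*w13)"
  apply (insert assms)
  apply (rule Rch_r1[where y=3], (simp_all add: cs)[5])
  apply (rule Rch_r2[where y=2], (simp_all add: cs)[6])
  apply (rule Rch_r1[where y=3], (simp_all add: cs)[5])
  apply (rule Rch_r2[where y=1], (simp_all add: cs)[6])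
  apply (rule Rch_r1[where y=2], (simp_all add: cs)[5])
  apply (rule Rch_r2[where y=3], (simp_all add: cs)[6])
  apply (rule Rch_r1[where y=2], (simp_all add: cs)[5])
  apply (rule fin; simp add: cs)
  done

lemma cyc_3_0:
  assumes "ok s" "pos s 0 = 3" "pos s 1 = 1" "pos s 2 = 1"
  shows "Rch s (C s) (4*w12 - 2*w13 - 2*w23)"
  apply (insert assms)
  apply (rule Rch_r1[where y=2], (simp_all add: cs)[5])
  apply (rule Rch_r1[where y=1], (simp_all add: cs)[5])
  apply (rule Rch_r2[where y=2], (simp_all add: cs)[6])
  apply (rule Rch_r1[where y=1], (simp_all add: cs)[5])
  apply (rule Rch_r1[where y=2], (simp_all add: cs)[5])
  apply (rule Rch_r2[where y=1], (simp_all add: cs)[6])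
  apply (rule Rch_r1[where y=2], (simp_all add: cs)[5])
  apply (rule Rch_r2[where y=3], (simp_all add: cs)[6])
  apply (rule Rch_r1[where y=1], (simp_all add: cs)[5])
  apply (rule Rch_r1[where y=3], (simp_all add: cs)[5])
  apply (rule fin; simp add: cs)
  done

lemma cyc_3_1:
  assumes "ok s" "pos s 0 = 3" "pos s 1 = 1" "pos s 2 = 1"
  shows "Rch s (C s) (4*w13 - 2*w12 - 2*w23)"
  apply (insert assms)
  apply (rule Rch_r1[where y=2], (simp_all add: cs)[5])
  apply (rule Rch_r1[where y=1], (simp_all add: cs)[5])
  apply (rule Rch_r2[where y=2], (simp_all add: cs)[6])
  apply (rule Rch_r1[where y=3], (simp_all add: cs)[5])
  apply (rule Rch_r2[where y=1], (simp_all add: cs)[6])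
  apply (rule Rch_r1[where y=3], (simp_all add: cs)[5])
  apply (rule Rch_r1[where y=1], (simp_all add: cs)[5])
  apply (rule Rch_r2[where y=3], (simp_all add: cs)[6])
  apply (rule Rch_r1[where y=1], (simp_all add: cs)[5])
  apply (rule Rch_r1[where y=3], (simp_all add: cs)[5])
  apply (rule fin; simp add: cs)
  done

lemma cyc_3_2:
  assumes "ok s" "pos s 0 = 3" "pos s 1 = 1" "pos s 2 = 1"
  shows "Rch s (C s) (4*w23 - 2*w12 - 2*w13)"
  apply (insert assms)
  apply (rule Rch_r1[where y=2], (simp_all add: cs)[5])
  apply (rule Rch_r2[where y=3], (simp_all add: cs)[6])
  apply (rule Rch_r1[where y=2], (simp_all add: cs)[5])
  apply (rule Rch_r2[where y=1], (simp_all add: cs)[6])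
  apply (rule Rch_r1[where y=3], (simp_all add: cs)[5])
  apply (rule Rch_r2[where y=2], (simp_all add: cs)[6])
  apply (rule Rch_r1[where y=3], (simp_all add: cs)[5])
  apply (rule fin; simp add: cs)
  done


lemma R_refl: "ok s \<Longrightarrow> R m s s 0" by (simp add: R_def Rch_refl)

lemma R_trans: "R m s t a \<Longrightarrow> R m t u b \<Longrightarrow> R m s u (a + b)"
  unfolding R_def
proof (elim conjE, intro conjI)
  assume "Rch s t a" "Rch t u b"
  then show "Rch s u (a + b)" by (rule Rch_trans)
qed auto

lemma R_mono: "m \<le> m' \<Longrightarrow> R m s t \<delta> \<Longrightarrow> R m' s t \<delta>"
  unfolding R_def by auto

lemma R_round:
  assumes "ok s" "peg y" "y \<noteq> pos s 0" "1 \<le> k" "k < n" "k < m" "pos s k \<noteq> y" "\<forall>j. 1 \<le> j \<and> j < k \<longrightarrow> pos s j = y"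
  shows "R m s (rnd s y k) (gain s y k)"
  unfolding R_def
proof (intro conjI)
  show "Rch s (rnd s y k) (gain s y k)"
    by (rule Rch_round[OF assms(1-5,7,8)]) (simp add: Rch_refl)
  show "ok (rnd s y k)" using ok_rnd assms by auto
  show "\<forall>ka. m \<le> ka \<longrightarrow> pos (rnd s y k) ka = pos s ka" using assms by (auto simp: pos_rnd)
  show "movedL s \<longrightarrow> movedL (rnd s y k)" by (simp add: movedL_rnd)
  show "EQ \<longrightarrow> gain s y k = 0" by (simp add: gain_def W_EQ)
qed

lemma ok_peg: "ok s \<Longrightarrow> k < n \<Longrightarrow> pos s k \<in> {1,2,3}"
  by (auto simp: ok_def peg_def)

lemma step1:
  assumes "ok s" "pos s 1 \<noteq> pos s 0" "y = 6 - pos s 1 - pos s 0"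
  shows "R 2 s (rnd s y 1) (gain s y 1)" and "pos (rnd s y 1) 1 = pos s 0" and "pos (rnd s y 1) 0 = y"
    and "y \<noteq> pos s 0" and "y \<noteq> pos s 1" and "peg y"
proof -
  have p: "pos s 0 \<in> {1,2,3}" "pos s 1 \<in> {1,2,3}" using ok_peg[OF assms(1)] n1 n0 by auto
  show y: "y \<noteq> pos s 0" "y \<noteq> pos s 1" "peg y" using p assms(2,3) by (auto simp: peg_def)
  show "R 2 s (rnd s y 1) (gain s y 1)"
    by (rule R_round) (use assms y n1 in auto)
  show "pos (rnd s y 1) 1 = pos s 0"
    using p assms(2,3) by (auto simp: pos_rnd)
  show "pos (rnd s y 1) 0 = y"
    by (simp add: pos_rnd)
qed

lemma base_distinct:
  assumes "ok s" "peg f" "pos s 1 \<noteq> pos s 0"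
  shows "\<exists>t \<delta>. R 2 s t \<delta> \<and> pos t 1 = f \<and> pos t 0 \<noteq> f"
proof -
  have p: "pos s 0 \<in> {1,2,3}" "pos s 1 \<in> {1,2,3}" using ok_peg[OF assms(1)] n1 n0 by auto
  have pf: "f \<in> {1,2,3}" using assms(2) by (simp add: peg_def)
  define y where "y = 6 - pos s 1 - pos s 0"
  note S = step1[OF assms(1,3) y_def]
  show ?thesis
  proof (cases "pos s 1 = f")
    case True
    have "R 2 s s 0" by (rule R_refl[OF assms(1)])
    moreover have "pos s 0 \<noteq> f" using True assms(3) by simp
    ultimately show ?thesis using True by (intro exI[of _ s] exI[of _ 0] conjI)
  next
    case F1: False
    show ?thesis
    proof (cases "pos s 0 = f")
      case True
      have "y \<noteq> f" using S(4) True by simp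
      then show ?thesis using S(1-3) True by (intro exI[of _ "rnd s y 1"] exI[of _ "gain s y 1"] conjI) simp_all
    next
      case F0: False
      have yf: "y = f" using p pf F0 F1 assms(3) unfolding y_def by auto
      define t1 where "t1 = rnd s y 1"
      have A: "R 2 s t1 (gain s y 1)" "pos t1 1 = pos s 0" "pos t1 0 = f"
        using S(1-3) yf unfolding t1_def by auto
      have ok1: "ok t1" using A(1) by (simp add: R_def)
      have d1: "pos t1 1 \<noteq> pos t1 0" using A F0 by simp
      define y2 where "y2 = 6 - pos t1 1 - pos t1 0"
      note S2 = step1[OF ok1 d1 y2_def]
      have "y2 \<noteq> f" using S2(4) A(3) by simp
      then have "pos (rnd t1 y2 1) 0 \<noteq> f" using S2(3) by simp
      then show ?thesis using R_trans[OF A(1) S2(1)] S2(2) A(3) by (intro exI conjI) (simp_all only:)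
    qed
  qed
qed

lemma base2:
  assumes "ok s" "peg f"
  shows "\<exists>t \<delta>. R 2 s t \<delta> \<and> pos t 1 = f \<and> pos t 0 \<noteq> f"
proof (cases "pos s 1 = pos s 0")
  case False then show ?thesis using base_distinct assms by blast
next
  case True
  have p: "pos s 0 \<in> {1,2,3}" "pos s 1 \<in> {1,2,3}" using ok_peg[OF assms(1)] n1 n0 by auto
  define y where "y = (if pos s 0 = 1 then 2 else (1::nat))"
  define t1 where "t1 = rnd s y 1"
  have A: "R 2 s t1 (gain s y 1)"
    unfolding t1_def by (rule R_round) (use assms p n1 True in \<open>auto simp: peg_def y_def\<close>)
  have ok1: "ok t1" using A by (simp add: R_def)
  have "pos t1 1 \<noteq> pos t1 0" using p True unfolding t1_def y_def by (auto simp: pos_rnd)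
  then obtain t \<delta> where B: "R 2 t1 t \<delta>" "pos t 1 = f" "pos t 0 \<noteq> f" using base_distinct[OF ok1 assms(2)] by blast
  show ?thesis using R_trans[OF A B(1)] B(2,3) by blast
qed

lemma gather:
  assumes "2 \<le> m"
  shows "m \<le> n \<Longrightarrow> ok s \<Longrightarrow> peg f \<Longrightarrow> \<exists>t \<delta>. R m s t \<delta> \<and> (\<forall>k. 1 \<le> k \<and> k < m \<longrightarrow> pos t k = f) \<and> pos t 0 \<noteq> f
     \<and> (m = n \<and> pos s (n - 1) \<noteq> f \<longrightarrow> movedL t)"
  using assms
proof (induction m arbitrary: s f rule: nat_induct_at_least)
  case base
  obtain t \<delta> where "R 2 s t \<delta>" "pos t 1 = f" "pos t 0 \<noteq> f" using base2 base by blast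
  moreover have "\<forall>k. 1 \<le> k \<and> k < 2 \<longrightarrow> pos t k = f" using \<open>pos t 1 = f\<close>
    by (metis One_nat_def le_antisym less_2_cases_iff not_one_le_zero)
  ultimately show ?case using n3 by auto
next
  case (Suc m)
  have mn: "m \<le> n" "m < n" using Suc by auto
  have pf: "f \<in> {1,2,3}" using Suc.prems by (simp add: peg_def)
  have pa: "pos s m \<in> {1,2,3}" using ok_peg[OF Suc.prems(2) mn(2)] .
  show ?case
  proof (cases "pos s m = f")
    case True
    obtain t \<delta> where A: "R m s t \<delta>" "\<forall>k. 1 \<le> k \<and> k < m \<longrightarrow> pos t k = f" "pos t 0 \<noteq> f"
      using Suc.IH[OF mn(1) Suc.prems(2,3)] by blast
    have "pos t m = f" using A(1) True by (simp add: R_def)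
    then have "\<forall>k. 1 \<le> k \<and> k < Suc m \<longrightarrow> pos t k = f" using A(2) less_Suc_eq by auto
    moreover have "R (Suc m) s t \<delta>" using R_mono[OF _ A(1)] by simp
    ultimately show ?thesis using A(3) True Suc.prems(1) by auto
  next
    case False
    define c where "c = 6 - pos s m - f"
    have pc: "peg c" "c \<noteq> pos s m" "c \<noteq> f" using pa pf False by (auto simp: c_def peg_def)
    obtain t1 d1 where A: "R m s t1 d1" "\<forall>k. 1 \<le> k \<and> k < m \<longrightarrow> pos t1 k = c" "pos t1 0 \<noteq> c"
      using Suc.IH[OF mn(1) Suc.prems(2) pc(1)] by blast
    have ok1: "ok t1" and pm1: "pos t1 m = pos s m" using A(1) by (auto simp: R_def)
    define t2 where "t2 = rnd t1 c m"
    have B: "R (Suc m) t1 t2 (gain t1 c m)"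
      unfolding t2_def by (rule R_round) (use ok1 pc A(2,3) pm1 mn Suc.hyps in auto)
    have ok2: "ok t2" using B by (simp add: R_def)
    have pm2: "pos t2 m = f" using pm1 pa pf pc Suc.hyps unfolding t2_def c_def by (auto simp: pos_rnd)
    have ml2: "Suc m = n \<longrightarrow> movedL t2" unfolding t2_def by (auto simp: movedL_rnd)
    obtain t3 d3 where C: "R m t2 t3 d3" "\<forall>k. 1 \<le> k \<and> k < m \<longrightarrow> pos t3 k = f" "pos t3 0 \<noteq> f"
      using Suc.IH[OF mn(1) ok2 Suc.prems(3)] by blast
    have pm3: "pos t3 m = f" using C(1) pm2 by (simp add: R_def)
    have ml3: "Suc m = n \<longrightarrow> movedL t3" using C(1) ml2 by (simp add: R_def)
    have "R (Suc m) s t3 (d1 + gain t1 c m + d3)"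
      using R_trans[OF R_trans[OF R_mono[OF _ A(1)] B] R_mono[OF _ C(1)]] by simp
    moreover have "\<forall>k. 1 \<le> k \<and> k < Suc m \<longrightarrow> pos t3 k = f" using C(2) pm3 less_Suc_eq by auto
    ultimately show ?thesis using C(3) ml3 by blast
  qed
qed


lemma final_wins:
  assumes "ok t" "peg f" "pos t 0 \<noteq> f" "ends n e (after n t 0 f)" "d + W (pos t 0) f > 0"
  shows "WIN t d"
proof (rule wins.step[OF _ refl refl])
  show "legal n e t 0 f" using assms n0 by (auto simp: legal_def ok_def)
  show "ends n e (after n t 0 f) \<and> d + W (pos t 0) f > 0 \<or>
    (\<not> ends n e (after n t 0 f) \<and> (\<exists>k' j'. legal n e (after n t 0 f) k' j') \<and>
     (\<forall>k' j'. legal n e (after n t 0 f) k' j' \<longrightarrow>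
        ends n e (after n (after n t 0 f) k' j') \<and> d + W (pos t 0) f - W (pos (after n t 0 f) k') j' > 0 \<or>
        \<not> ends n e (after n (after n t 0 f) k' j') \<and>
        WIN (after n (after n t 0 f) k' j') (d + W (pos t 0) f - W (pos (after n t 0 f) k') j')))"
    using assms(4,5) by blast
qed

definition tgt :: nat where "tgt = (case e of EC1 f \<Rightarrow> f | _ \<Rightarrow> 1)"

lemma peg_tgt: "valid_ending e \<Longrightarrow> peg tgt"
  unfolding tgt_def by (cases e) (auto simp: tgt_def valid_ending_def peg_def)

lemma ends_final:
  assumes "valid_ending e" "\<forall>k. 1 \<le> k \<and> k < n \<longrightarrow> pos t k = tgt" "movedL t"
  shows "ends n e (after n t 0 tgt)"
proof -
  have T: "tower n (pos (after n t 0 tgt)) tgt" using assms(2) unfolding tower_def after_def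
    by (auto simp: not_less_eq_eq)
  have L: "movedL (after n t 0 tgt)" "movedS (after n t 0 tgt)" using assms(3) by (auto simp: after_def)
  show ?thesis using T L assms(1) unfolding tgt_def by (cases e) (auto simp: ends_def valid_ending_def)
qed

lemma canwin:
  assumes "ok s" "valid_ending e"
  shows "\<exists>c. (EQ \<longrightarrow> c = w12) \<and> (\<forall>d. d + c > 0 \<longrightarrow> WIN s d)"
proof -
  define g where "g = (if pos s (n - 1) = 1 then 2 else (1::nat))"
  have pg: "peg g" by (simp add: g_def peg_def)
  have "n - 1 < n" using n0 by simp
  obtain t1 d1 where A: "R n s t1 d1" "pos s (n - 1) \<noteq> g \<longrightarrow> movedL t1"
    using gather[of n s g] n3 assms(1) pg by auto
  have ml1: "movedL t1" using A(2) by (simp add: g_def)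
  have ok1: "ok t1" using A(1) by (simp add: R_def)
  obtain t2 d2 where B: "R n t1 t2 d2" "\<forall>k. 1 \<le> k \<and> k < n \<longrightarrow> pos t2 k = tgt" "pos t2 0 \<noteq> tgt"
    using gather[of n t1 tgt] n3 ok1 peg_tgt[OF assms(2)] by auto
  have AB: "R n s t2 (d1 + d2)" by (rule R_trans[OF A(1) B(1)])
  have ok2: "ok t2" and ml2: "movedL t2" using B(1) ml1 by (auto simp: R_def)
  have E: "ends n e (after n t2 0 tgt)" by (rule ends_final[OF assms(2) B(2) ml2])
  define c where "c = d1 + d2 + W (pos t2 0) tgt"
  show ?thesis
  proof (intro exI conjI allI impI)
    show "EQ \<Longrightarrow> c = w12" using AB by (simp add: c_def R_def W_EQ)
    fix d assume "d + c > 0"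
    then have "WIN t2 (d + (d1 + d2))"
      by (intro final_wins[OF ok2 peg_tgt[OF assms(2)] B(3) E]) (simp add: c_def algebra_simps)
    then show "WIN s d" using AB by (simp add: R_def Rch_def)
  qed
qed

lemma pump:
  assumes "Rch u u G" "G > 0" "\<forall>d. d + c > 0 \<longrightarrow> WIN u d"
  shows "WIN u d"
proof -
  have P: "\<forall>d. d + real K * G + c > 0 \<longrightarrow> WIN u d" for K
  proof (induction K)
    case 0 then show ?case using assms(3) by simp
  next
    case (Suc K)
    show ?case
    proof (intro allI impI)
      fix d assume "d + real (Suc K) * G + c > 0"
      then have "(d + G) + real K * G + c > 0" by (simp add: algebra_simps)
      then have "WIN u (d + G)" using Suc.IH by blast
      then show "WIN u d" using assms(1) by (simp add: Rch_def)
    qed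
  qed
  obtain K where "- d - c < real K * G" using reals_Archimedean3[OF assms(2)] by blast
  then show ?thesis using P[of K] by (simp add: algebra_simps)
qed

lemma C_idem: "C (C s) = C s" by (simp add: C_def)
lemma ok_C: "ok s \<Longrightarrow> ok (C s)" by (simp add: C_def ok_def)
lemma pos_C: "pos (C s) = pos s" by (simp add: C_def)

lemma main_loc:
  assumes "ok s" "valid_ending e" "\<not> (w12 = w13 \<and> w13 = w23 \<and> w23 \<le> 0)"
  shows "WIN s 0"
proof (cases EQ)
  case True
  obtain c where "EQ \<longrightarrow> c = w12" "\<forall>d. d + c > 0 \<longrightarrow> WIN s d" using canwin[OF assms(1,2)] by blast
  moreover have "w12 > 0" using True assms(3) by (auto simp: EQ_def)
  ultimately show ?thesis using True by simp
next
  case False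
  obtain t \<delta> where A: "R 3 s t \<delta>" "\<forall>k. 1 \<le> k \<and> k < 3 \<longrightarrow> pos t k = 1" "pos t 0 \<noteq> 1"
    using gather[of 3 s 1] n3 assms(1) by (auto simp: peg_def)
  have okt: "ok t" using A(1) by (simp add: R_def)
  have t1: "pos t 1 = 1" "pos t 2 = 1" using A(2) by auto
  have t0: "pos t 0 = 2 \<or> pos t 0 = 3" using ok_peg[OF okt n0] A(3) by auto
  have "\<exists>G>0. \<forall>u. ok u \<longrightarrow> pos u 0 = pos t 0 \<longrightarrow> pos u 1 = 1 \<longrightarrow> pos u 2 = 1 \<longrightarrow> Rch u (C u) G"
  proof -
    have "4*w12 - 2*w13 - 2*w23 > 0 \<or> 4*w13 - 2*w12 - 2*w23 > 0 \<or> 4*w23 - 2*w12 - 2*w13 > 0"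
    proof (rule ccontr)
      assume "\<not> ?thesis"
      then have "w12 = w13" "w13 = w23" by linarith+
      then show False using False unfolding EQ_def by simp
    qed
    then show ?thesis using t0 cyc_2_0 cyc_2_1 cyc_2_2 cyc_3_0 cyc_3_1 cyc_3_2 by metis
  qed
  then obtain G where G: "G > 0" "\<And>u. ok u \<Longrightarrow> pos u 0 = pos t 0 \<Longrightarrow> pos u 1 = 1 \<Longrightarrow> pos u 2 = 1 \<Longrightarrow> Rch u (C u) G"
    by blast
  have R1: "Rch t (C t) G" using G(2)[OF okt refl t1] .
  have R2: "Rch (C t) (C t) G" using G(2)[OF ok_C[OF okt]] t1 pos_C C_idem by metis
  obtain c where "\<forall>d. d + c > 0 \<longrightarrow> WIN (C t) d" using canwin[OF ok_C[OF okt] assms(2)] by blast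
  then have W1: "WIN (C t) d" for d using pump[OF R2 G(1)] by blast
  have "WIN t d" for d using R1 W1 by (simp add: Rch_def)
  then show ?thesis using A(1) by (simp add: R_def Rch_def)
qed

end

theorem mainTheorem8:
  fixes n :: nat and e :: ending and w12 w13 w23 :: real
    and p :: "nat \<Rightarrow> nat" and l :: "nat option"
  assumes "n \<ge> 3"
    and "valid_ending e"
    and "\<forall>k<n. peg (p k)"
    and "case l of None \<Rightarrow> True | Some k \<Rightarrow> 0 < k \<and> k < n"
    and "\<not> ends n e \<lparr> pos = p, lastd = l, movedL = False, movedS = False \<rparr>"
    and "\<not> (w12 = w13 \<and> w13 = w23 \<and> w23 \<le> 0)"
  shows "wins n e w12 w13 w23 \<lparr> pos = p, lastd = l, movedL = False, movedS = False \<rparr> 0"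
proof -
  interpret hg n e w12 w13 w23 by unfold_locales (rule assms(1))
  have "ok \<lparr> pos = p, lastd = l, movedL = False, movedS = False \<rparr>"
    using assms(3,4) by (cases l) (auto simp: ok_def)
  then show ?thesis using main_loc assms(2,6) by blast
qed

end
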